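(* Let $\Gamma$ be a rooted Eisenbud–Neumann diagram and $v_i$ a node which is not the root, has no node beyond it, and supports exactly one arrowhead $L_i$ (with near weight $\beta_{i1}$ and multiplicity $n_i$), all other neighbours of $v_i$ except the one towards the root being leaves, attached by edges with near weights $\beta_{i2},\dots,\beta_{ik_i}$. Let $\Gamma'$ (the collapse) be obtained by replacing $v_i$, $L_i$ and these leaves by a single arrowhead $L_i'$ at the end of the edge from the parent, with multiplicity $\beta n_i$, $\beta=\beta_{i2}\cdots\beta_{ik_i}$, all other weights and multiplicities unchanged. Then the linking matrix of $\Gamma$ in the basis $L_1,\dots,L_i,\dots,L_\nu$ equals the linking matrix of $\Gamma'$ in the basis $L_1,\dots,\beta L_i',\dots,L_\nu$ (so the two linking matrices are congruent over $\mathbb Q$). Moreover, if $\Gamma$ satisfies conditions (a) all near weights positive and no far weight zero, (b) negativity of a far weight at $v$ forces negativity of far weights at all nodes beyond $v$, (c) all vertex multiplicities positive, then so does $\Gamma'$.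
   Context: A rooted Eisenbud–Neumann (splice) diagram is a finite tree with a distinguished root vertex, whose vertices are nodes, leaves (valency one, not arrowheads) and arrowhead vertices $L_1,\dots,L_\nu$ carrying multiplicities $n_1,\dots,n_\nu$; at each node every incident edge carries a weight at that node (omitted weights equal $1$). At a node $v$, the weight on the edge leading from $v$ towards the root is the far weight at $v$; the weights at $v$ on the other incident edges are near weights at $v$. A node $w$ is beyond a node $v$ if the geodesic from $w$ to the root contains $v$. For distinct vertices $v,w$, $\mathrm{lk}(v,w)$ is the product of all edge weights adjacent to but not on the geodesic between $v$ and $w$. The multiplicity of a non-arrowhead vertex $v$ is $M_v=\sum_j n_j\,\mathrm{lk}(v,L_j)$. The linking matrix is $(\mathrm{lk}(L_i,L_j))$ with self-linking defined by $\mathrm{lk}(L_i,\sum_jn_jL_j)=0$; linking extends bilinearly to rational combinations of arrowheads. *)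

theory Defs imports Complex_Main begin

text \<open>A rooted Eisenbud-Neumann (splice) diagram: a finite tree (vertex set, symmetric
irreflexive adjacency, unique simple path between any two vertices), a root, a set of
arrowhead vertices, weights (wt v u = weight at node v on the edge {v,u}) and
multiplicities of arrowheads.\<close>

record 'v diagram =
  verts :: "'v set"
  adj :: "'v \<Rightarrow> 'v \<Rightarrow> bool"
  rt :: 'v
  arrows :: "'v set"
  wt :: "'v \<Rightarrow> 'v \<Rightarrow> int"
  amult :: "'v \<Rightarrow> int"

definition nbrs :: "'v diagram \<Rightarrow> 'v \<Rightarrow> 'v set" where
  "nbrs G v = {u \<in> verts G. adj G v u}"

definition is_path :: "'v diagram \<Rightarrow> 'v list \<Rightarrow> 'v \<Rightarrow> 'v \<Rightarrow> bool" where
  "is_path G p u w \<longleftrightarrow> p \<noteq> [] \<and> hd p = u \<and> last p = w \<and> distinct p \<and> set p \<subseteq> verts G \<and>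
     (\<forall>k. Suc k < length p \<longrightarrow> adj G (p ! k) (p ! Suc k))"

definition wf_diagram :: "'v diagram \<Rightarrow> bool" where
  "wf_diagram G \<longleftrightarrow> finite (verts G) \<and>
     (\<forall>u v. adj G u v \<longrightarrow> u \<in> verts G \<and> v \<in> verts G \<and> u \<noteq> v \<and> adj G v u) \<and>
     (\<forall>u\<in>verts G. \<forall>w\<in>verts G. \<exists>!p. is_path G p u w) \<and>
     rt G \<in> verts G \<and> arrows G \<subseteq> verts G \<and>
     (\<forall>a\<in>arrows G. card (nbrs G a) = 1)"

definition leaves :: "'v diagram \<Rightarrow> 'v set" where
  "leaves G = {v \<in> verts G - arrows G. card (nbrs G v) = 1}"

definition nodes :: "'v diagram \<Rightarrow> 'v set" where
  "nodes G = verts G - arrows G - leaves G"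

definition geod :: "'v diagram \<Rightarrow> 'v \<Rightarrow> 'v \<Rightarrow> 'v list" where
  "geod G u w = (THE p. is_path G p u w)"

definition path_edges :: "'v list \<Rightarrow> 'v set set" where
  "path_edges p = {{p ! k, p ! Suc k} | k. Suc k < length p}"

definition lk :: "'v diagram \<Rightarrow> 'v \<Rightarrow> 'v \<Rightarrow> int" where
  "lk G v w = (\<Prod>x\<in>set (geod G v w) \<inter> nodes G.
      \<Prod>u\<in>{u \<in> nbrs G x. {x, u} \<notin> path_edges (geod G v w)}. wt G x u)"

definition parent :: "'v diagram \<Rightarrow> 'v \<Rightarrow> 'v" where
  "parent G v = geod G v (rt G) ! 1"

definition beyond :: "'v diagram \<Rightarrow> 'v \<Rightarrow> 'v \<Rightarrow> bool" where
  "beyond G w v \<longleftrightarrow> v \<in> set (geod G w (rt G))"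

definition far_wt :: "'v diagram \<Rightarrow> 'v \<Rightarrow> int" where
  "far_wt G v = wt G v (parent G v)"

definition near_edge :: "'v diagram \<Rightarrow> 'v \<Rightarrow> 'v \<Rightarrow> bool" where
  "near_edge G v u \<longleftrightarrow> u \<in> nbrs G v \<and> (v = rt G \<or> u \<noteq> parent G v)"

definition vmult :: "'v diagram \<Rightarrow> 'v \<Rightarrow> int" where
  "vmult G v = (\<Sum>j\<in>arrows G. amult G j * lk G v j)"

text \<open>Linking matrix; self-linking from lk(L_a, sum_j n_j L_j) = 0 (division by a zero
multiplicity gives 0 by the HOL convention).\<close>
definition linkmat :: "'v diagram \<Rightarrow> 'v \<Rightarrow> 'v \<Rightarrow> rat" where
  "linkmat G a b = (if a = b
     then - (\<Sum>j\<in>arrows G - {a}. of_int (amult G j * lk G a j)) / of_int (amult G a)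
     else of_int (lk G a b))"

text \<open>Bilinear extension to rational combinations of arrowheads (coefficient functions).\<close>
definition lk_comb :: "'v diagram \<Rightarrow> ('v \<Rightarrow> rat) \<Rightarrow> ('v \<Rightarrow> rat) \<Rightarrow> rat" where
  "lk_comb G f g = (\<Sum>a\<in>arrows G. \<Sum>b\<in>arrows G. f a * g b * linkmat G a b)"

definition condA :: "'v diagram \<Rightarrow> bool" where
  "condA G \<longleftrightarrow> (\<forall>v\<in>nodes G. \<forall>u. near_edge G v u \<longrightarrow> wt G v u > 0) \<and>
                (\<forall>v\<in>nodes G - {rt G}. far_wt G v \<noteq> 0)"

definition condB :: "'v diagram \<Rightarrow> bool" where
  "condB G \<longleftrightarrow> (\<forall>v\<in>nodes G - {rt G}. far_wt G v < 0 \<longrightarrow>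
                  (\<forall>w\<in>nodes G - {rt G}. beyond G w v \<longrightarrow> far_wt G w < 0))"

definition condC :: "'v diagram \<Rightarrow> bool" where
  "condC G \<longleftrightarrow> (\<forall>v\<in>verts G - arrows G. vmult G v > 0)"

definition collapsible :: "'v diagram \<Rightarrow> 'v \<Rightarrow> 'v \<Rightarrow> bool" where
  "collapsible G vi Li \<longleftrightarrow> vi \<in> nodes G \<and> vi \<noteq> rt G \<and>
     (\<forall>w\<in>nodes G. beyond G w vi \<longrightarrow> w = vi) \<and>
     {u \<in> nbrs G vi. u \<in> arrows G} = {Li} \<and>
     (\<forall>u\<in>nbrs G vi - {parent G vi, Li}. u \<in> leaves G)"

definition collapse_beta :: "'v diagram \<Rightarrow> 'v \<Rightarrow> 'v \<Rightarrow> int" where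
  "collapse_beta G vi Li = (\<Prod>u\<in>nbrs G vi - {parent G vi, Li}. wt G vi u)"

text \<open>The collapse: vi, Li and the leaves at vi are replaced by one arrowhead L_i',
which is represented by the vertex vi itself (now an arrowhead of valency one).\<close>
definition collapse :: "'v diagram \<Rightarrow> 'v \<Rightarrow> 'v \<Rightarrow> 'v diagram" where
  "collapse G vi Li = (let R = nbrs G vi - {parent G vi} in
     G\<lparr>verts := verts G - R,
       adj := (\<lambda>x y. adj G x y \<and> x \<notin> R \<and> y \<notin> R),
       arrows := (arrows G - {Li}) \<union> {vi},
       amult := (amult G)(vi := collapse_beta G vi Li * amult G Li)\<rparr>)"

end

theory Submission imports Defs begin


lemma pendant_not_interior:
  assumes sym: "\<forall>a b. adj H a b \<longrightarrow> adj H b a" and p: "is_path H p u w"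
    and x: "x \<in> set p" "x \<noteq> u" "x \<noteq> w" and c: "card (nbrs H x) = 1"
  shows False
proof -
  obtain k where k: "k < length p" "p!k = x" by (metis x(1) in_set_conv_nth)
  from p have ne: "p \<noteq> []" and h: "hd p = u" and l: "last p = w" and d: "distinct p"
    and sv: "set p \<subseteq> verts H" and ad: "\<forall>k. Suc k < length p \<longrightarrow> adj H (p ! k) (p ! Suc k)"
    unfolding is_path_def by auto
  have "k \<noteq> 0" using k x h ne by (metis hd_conv_nth)
  moreover have "k \<noteq> length p - 1" using k x l ne by (metis last_conv_nth)
  ultimately have k0: "0 < k" "Suc k < length p" using k by auto
  have a1: "adj H (p!(k-1)) (p!k)" using ad k0 by (metis Suc_pred' less_imp_Suc_add Suc_lessD add_lessD1 less_SucI)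
  have a2: "adj H x (p!(k-1))" using sym a1 k by auto
  have b2: "adj H x (p!Suc k)" using ad k0 k by auto
  have ne2: "p!(k-1) \<noteq> p!Suc k" using d k0 by (simp add: nth_eq_iff_index_eq)
  have "p!(k-1) \<in> nbrs H x" "p!Suc k \<in> nbrs H x"
    using a2 b2 sv k0 nth_mem[of "k-1" p] nth_mem[of "Suc k" p] unfolding nbrs_def by auto
  then show False using c ne2 by (metis card_1_singletonE singletonD)
qed

lemma pe_Cons: "path_edges (x # ys) = (if ys = [] then {} else insert {x, hd ys} (path_edges ys))"
proof (cases ys)
  case Nil then show ?thesis by (simp add: path_edges_def)
next
  case (Cons y zs)
  have "path_edges (x # ys) = {{(x#ys) ! k, (x#ys) ! Suc k} | k. Suc k < Suc (length ys)}"
    by (simp add: path_edges_def)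
  also have "\<dots> = insert {x, y} {{ys ! k, ys ! Suc k} | k. Suc k < length ys}"
  proof (rule set_eqI, rule iffI)
    fix e assume "e \<in> {{(x#ys) ! k, (x#ys) ! Suc k} | k. Suc k < Suc (length ys)}"
    then obtain k where "e = {(x#ys) ! k, (x#ys) ! Suc k}" "Suc k < Suc (length ys)" by blast
    then show "e \<in> insert {x, y} {{ys ! k, ys ! Suc k} | k. Suc k < length ys}"
      using Cons by (cases k) auto
  next
    fix e assume "e \<in> insert {x, y} {{ys ! k, ys ! Suc k} | k. Suc k < length ys}"
    then show "e \<in> {{(x#ys) ! k, (x#ys) ! Suc k} | k. Suc k < Suc (length ys)}"
    proof
      assume "e = {x,y}" then show ?thesis using Cons by (intro CollectI exI[of _ 0]) auto
    next
      assume "e \<in> {{ys ! k, ys ! Suc k} | k. Suc k < length ys}"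
      then obtain k where "e = {ys ! k, ys ! Suc k}" "Suc k < length ys" by blast
      then show ?thesis by (intro CollectI exI[of _ "Suc k"]) auto
    qed
  qed
  finally show ?thesis using Cons by (simp add: path_edges_def)
qed

lemma pe_snoc: "path_edges (xs @ [y]) = (if xs = [] then {} else insert {last xs, y} (path_edges xs))"
proof (induction xs)
  case Nil then show ?case by (simp add: pe_Cons)
next
  case (Cons a xs)
  then show ?case by (cases xs) (auto simp: pe_Cons insert_commute)
qed

lemma pe_rev: "path_edges (rev xs) = path_edges xs"
proof (induction xs)
  case Nil then show ?case by simp
next
  case (Cons a xs)
  show ?case
  proof (cases "xs = []")
    case True then show ?thesis by (simp add: pe_Cons)
  next
    case False
    have "path_edges (rev (a # xs)) = insert {hd xs, a} (path_edges (rev xs))"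
      using False by (simp only: rev.simps pe_snoc) (simp add: last_rev)
    also have "\<dots> = path_edges (a # xs)" using False Cons.IH by (simp add: pe_Cons insert_commute)
    finally show ?thesis .
  qed
qed

lemma pe_subset: "e \<in> path_edges xs \<Longrightarrow> e \<subseteq> set xs"
  unfolding path_edges_def by auto

lemma path_rev:
  assumes sym: "\<forall>a b. adj H a b \<longrightarrow> adj H b a" and p: "is_path H p u w"
  shows "is_path H (rev p) w u"
proof -
  from p have ne: "p \<noteq> []" and h: "hd p = u" and l: "last p = w" and d: "distinct p"
    and sv: "set p \<subseteq> verts H" and ad: "\<forall>k. Suc k < length p \<longrightarrow> adj H (p ! k) (p ! Suc k)"
    unfolding is_path_def by auto
  have "adj H (rev p ! k) (rev p ! Suc k)" if "Suc k < length p" for k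
  proof -
    have "adj H (p ! (length p - Suc (Suc k))) (p ! Suc (length p - Suc (Suc k)))"
      using ad that by auto
    moreover have "Suc (length p - Suc (Suc k)) = length p - Suc k" using that by auto
    ultimately show ?thesis using sym that by (simp add: rev_nth)
  qed
  then show ?thesis using ne h l d sv unfolding is_path_def by (auto simp: hd_rev last_rev)
qed

lemma wfE:
  assumes "wf_diagram G"
  shows "finite (verts G)" "\<forall>u v. adj G u v \<longrightarrow> u \<in> verts G \<and> v \<in> verts G \<and> u \<noteq> v \<and> adj G v u"
    "\<forall>u\<in>verts G. \<forall>w\<in>verts G. \<exists>!p. is_path G p u w" "rt G \<in> verts G" "arrows G \<subseteq> verts G"
    "\<forall>a\<in>arrows G. card (nbrs G a) = 1"
  by (insert assms, unfold wf_diagram_def, elim conjE, assumption)+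

lemma wf_unique:
  assumes "wf_diagram G" "u \<in> verts G" "w \<in> verts G"
  shows "\<exists>!p. is_path G p u w"
  using bspec[OF bspec[OF wfE(3)[OF assms(1)] assms(2)] assms(3)] .

lemma geod_path:
  assumes "wf_diagram G" "u \<in> verts G" "w \<in> verts G"
  shows "is_path G (geod G u w) u w"
  unfolding geod_def using theI'[OF wf_unique[OF assms]] .

lemma geod_eq:
  assumes "wf_diagram G" "is_path G p u w"
  shows "geod G u w = p"
proof -
  from assms(2) have ne: "p \<noteq> []" and h: "hd p = u" and l: "last p = w" and sv: "set p \<subseteq> verts G"
    unfolding is_path_def by blast+
  have uv: "u \<in> verts G" using hd_in_set[OF ne] h sv by auto
  have wv: "w \<in> verts G" using last_in_set[OF ne] l sv by auto
  have "\<exists>!p. is_path G p u w" using wf_unique[OF assms(1) uv wv] .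
  then show ?thesis using assms(2) unfolding geod_def by (rule the1_equality)
qed

lemma wf_sym: "wf_diagram G \<Longrightarrow> \<forall>a b. adj G a b \<longrightarrow> adj G b a"
  using wfE(2) by blast

lemma geod_rev:
  assumes "wf_diagram G" "u \<in> verts G" "w \<in> verts G"
  shows "geod G w u = rev (geod G u w)"
  using geod_eq[OF assms(1) path_rev[OF wf_sym[OF assms(1)] geod_path[OF assms]]] .

lemma lk_sym_gen:
  assumes "geod H w u = rev (geod H u w)"
  shows "lk H w u = lk H u w"
  unfolding lk_def assms by (simp add: pe_rev)



context
  fixes G :: "'v diagram" and vi Li :: 'v
  assumes wf: "wf_diagram G" and col: "collapsible G vi Li"
begin

abbreviation "R \<equiv> nbrs G vi - {parent G vi}"
abbreviation "H \<equiv> collapse G vi Li"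
abbreviation "par \<equiv> parent G vi"
abbreviation "\<beta> \<equiv> collapse_beta G vi Li"

lemma H_simps:
  "verts H = verts G - R" "adj H = (\<lambda>x y. adj G x y \<and> x \<notin> R \<and> y \<notin> R)"
  "arrows H = (arrows G - {Li}) \<union> {vi}" "amult H = (amult G)(vi := \<beta> * amult G Li)"
  "rt H = rt G" "wt H = wt G"
  unfolding collapse_def Let_def by simp_all

lemma sym: "\<forall>a b. adj G a b \<longrightarrow> adj G b a" using wf_sym[OF wf] .
lemma adjv: "adj G a b \<Longrightarrow> a \<in> verts G \<and> b \<in> verts G \<and> a \<noteq> b"
  using wfE(2)[OF wf] by blast
lemma fin: "finite (verts G)" using wfE(1)[OF wf] .
lemma finnb: "finite (nbrs G x)" using fin unfolding nbrs_def by auto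
lemma rtv: "rt G \<in> verts G" using wfE(4)[OF wf] .
lemma arrv: "arrows G \<subseteq> verts G" using wfE(5)[OF wf] .
lemma arr1: "a \<in> arrows G \<Longrightarrow> card (nbrs G a) = 1" using wfE(6)[OF wf] by blast

lemma vi_node: "vi \<in> nodes G" "vi \<noteq> rt G" using col unfolding collapsible_def by auto
lemma viv: "vi \<in> verts G" using vi_node unfolding nodes_def by auto
lemma vi_na: "vi \<notin> arrows G" using vi_node unfolding nodes_def by auto
lemma Li_arr: "Li \<in> arrows G" "Li \<in> nbrs G vi"
  using col unfolding collapsible_def by blast+
lemma nb_leaf: "u \<in> nbrs G vi - {par, Li} \<Longrightarrow> u \<in> leaves G"
  using col unfolding collapsible_def by blast

lemma par_nb: "par \<in> nbrs G vi"
proof -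
  let ?p = "geod G vi (rt G)"
  have p: "is_path G ?p vi (rt G)" using geod_path[OF wf viv rtv] .
  then have "?p \<noteq> []" "hd ?p = vi" "last ?p = rt G" unfolding is_path_def by auto
  then have "length ?p \<ge> 2" using vi_node(2)
    by (cases ?p; cases "tl ?p") auto
  then have "adj G (?p ! 0) (?p ! 1)" using p unfolding is_path_def by auto
  moreover have "?p ! 0 = vi" using \<open>hd ?p = vi\<close> \<open>?p \<noteq> []\<close> by (simp add: hd_conv_nth)
  ultimately show ?thesis unfolding parent_def nbrs_def using adjv by auto
qed

lemma R_pend: "u \<in> R \<Longrightarrow> card (nbrs G u) = 1"
  using nb_leaf arr1 Li_arr unfolding leaves_def by blast

lemma R_al: "u \<in> R \<Longrightarrow> u = Li \<or> u \<in> leaves G"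
  using nb_leaf by blast

lemma R_adj: "u \<in> R \<Longrightarrow> adj G x u \<Longrightarrow> x = vi"
proof -
  assume u: "u \<in> R" and a: "adj G x u"
  have "vi \<in> nbrs G u" "x \<in> nbrs G u" using u a sym adjv unfolding nbrs_def by auto
  then show "x = vi" using R_pend[OF u] by (metis card_1_singletonE singletonD)
qed

lemma vi_nR: "vi \<notin> R" using adjv unfolding nbrs_def by auto

lemma rt_nR: "rt G \<notin> R"
proof
  assume r: "rt G \<in> R"
  have "is_path G [vi, rt G] vi (rt G)"
    using r vi_node(2) viv rtv unfolding is_path_def nbrs_def by (auto simp: less_Suc_eq)
  then have "geod G vi (rt G) = [vi, rt G]" using geod_eq[OF wf] by blast
  then have "par = rt G" unfolding parent_def by simp
  then show False using r by simp
qed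

lemma Hsym: "\<forall>a b. adj H a b \<longrightarrow> adj H b a" using sym by (simp add: H_simps)

lemma nbrsH: "x \<in> verts H \<Longrightarrow> x \<noteq> vi \<Longrightarrow> nbrs H x = nbrs G x"
proof -
  assume x: "x \<in> verts H" "x \<noteq> vi"
  have "u \<notin> R" if "adj G x u" for u using R_adj[of u x] that x(2) by blast
  then show ?thesis using x unfolding nbrs_def H_simps by auto
qed

lemma nbrsH_vi: "nbrs H vi = {par}"
  unfolding nbrs_def H_simps using vi_nR par_nb unfolding nbrs_def by auto

lemma path_H: "is_path H p u w \<longleftrightarrow> is_path G p u w" if "u \<in> verts H" "w \<in> verts H"
proof
  assume "is_path H p u w" then show "is_path G p u w"
    unfolding is_path_def H_simps by auto
next
  assume p: "is_path G p u w"
  have "x \<notin> R" if "x \<in> set p" for x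
  proof
    assume x: "x \<in> R"
    then have "x \<noteq> u" "x \<noteq> w" using \<open>u \<in> verts H\<close> \<open>w \<in> verts H\<close> by (auto simp: H_simps)
    then show False using pendant_not_interior[OF sym p that] R_pend[OF x] by blast
  qed
  then show "is_path H p u w" using p unfolding is_path_def H_simps
    by (auto simp del: nth_mem intro!: nth_mem) (meson Suc_lessD nth_mem)+
qed

lemma geodH: "u \<in> verts H \<Longrightarrow> w \<in> verts H \<Longrightarrow> geod H u w = geod G u w"
  unfolding geod_def using path_H by presburger

lemma vH: "verts H \<subseteq> verts G" by (auto simp: H_simps)
lemma viH: "vi \<in> verts H" using viv vi_nR by (simp add: H_simps)
lemma rtH: "rt G \<in> verts H" using rtv rt_nR by (simp add: H_simps)

lemma pathH_geod: "u \<in> verts H \<Longrightarrow> w \<in> verts H \<Longrightarrow> is_path H (geod G u w) u w"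
  using path_H geod_path[OF wf] vH by blast

lemma nodesH: "nodes H = nodes G - {vi}"
proof (rule set_eqI)
  fix x
  show "x \<in> nodes H \<longleftrightarrow> x \<in> nodes G - {vi}"
  proof
    assume x: "x \<in> nodes H"
    then have xv: "x \<in> verts H" "x \<noteq> vi" "x \<notin> arrows G - {Li}" "card (nbrs H x) \<noteq> 1"
      unfolding nodes_def leaves_def by (auto simp: H_simps)
    then have c: "card (nbrs G x) \<noteq> 1" using nbrsH by simp
    then have "x \<notin> arrows G" using xv arr1 by blast
    then show "x \<in> nodes G - {vi}" using xv c vH unfolding nodes_def leaves_def by auto
  next
    assume x: "x \<in> nodes G - {vi}"
    then have "x \<notin> R" using R_al Li_arr unfolding nodes_def by blast
    then have "x \<in> verts H" using x unfolding nodes_def by (auto simp: H_simps)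
    then show "x \<in> nodes H" using x nbrsH unfolding nodes_def leaves_def by (auto simp: H_simps)
  qed
qed

lemma parentH: "v \<in> verts H \<Longrightarrow> parent H v = parent G v"
  unfolding parent_def using geodH rtH by (simp add: H_simps)

lemma beyondH: "w \<in> verts H \<Longrightarrow> beyond H w v = beyond G w v"
  unfolding beyond_def using geodH rtH by (simp add: H_simps)

lemma nodesH_v: "v \<in> nodes H \<Longrightarrow> v \<in> verts H"
  unfolding nodes_def by auto

lemma near_H: "v \<in> nodes H \<Longrightarrow> near_edge H v u = near_edge G v u"
  unfolding near_edge_def using nodesH_v nbrsH parentH nodesH by (auto simp: H_simps)

lemma far_H: "v \<in> nodes H \<Longrightarrow> far_wt H v = far_wt G v"
  unfolding far_wt_def using nodesH_v parentH by (auto simp: H_simps)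

lemma Li_nodes: "Li \<notin> nodes G" using Li_arr unfolding nodes_def by auto

lemma lkE:
  assumes v: "v \<in> verts H" "v \<noteq> vi" and j: "j \<in> verts H" "j \<noteq> vi"
  shows "lk H v j = lk G v j"
proof -
  have P: "is_path H (geod G v j) v j" using pathH_geod v j by blast
  have vinP: "vi \<notin> set (geod G v j)"
    using pendant_not_interior[OF Hsym P, of vi] v j nbrsH_vi by auto
  have e1: "set (geod G v j) \<inter> nodes H = set (geod G v j) \<inter> nodes G"
    using vinP nodesH by auto
  have sP: "set (geod G v j) \<subseteq> verts H" using P unfolding is_path_def by auto
  show ?thesis unfolding lk_def geodH[OF v(1) j(1)] e1
  proof (rule prod.cong[OF refl])
    fix x assume x: "x \<in> set (geod G v j) \<inter> nodes G"
    then have "x \<in> verts H" "x \<noteq> vi" using sP vinP by auto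
    then show "(\<Prod>u\<in>{u \<in> nbrs H x. {x, u} \<notin> path_edges (geod G v j)}. wt H x u) =
      (\<Prod>u\<in>{u \<in> nbrs G x. {x, u} \<notin> path_edges (geod G v j)}. wt G x u)"
      using nbrsH by (simp add: H_simps)
  qed
qed

lemma lkD:
  assumes v: "v \<in> verts G" "v \<notin> R" "v \<noteq> vi" "v \<noteq> Li"
  shows "Li \<in> R"
proof (rule ccontr)
  assume LR: "Li \<notin> R"
  then have Lp: "Li = par" using Li_arr by auto
  have pend: "y \<in> nbrs G vi \<Longrightarrow> card (nbrs G y) = 1" for y
    using R_pend Lp arr1 Li_arr by (cases "y = par") auto
  define P where "P = geod G v vi"
  have PG: "is_path G P v vi" using geod_path[OF wf v(1) viv] P_def by simp
  then have ne: "P \<noteq> []" and h: "hd P = v" and l: "last P = vi" and d: "distinct P"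
    and sv: "set P \<subseteq> verts G" and ad: "\<forall>k. Suc k < length P \<longrightarrow> adj G (P ! k) (P ! Suc k)"
    unfolding is_path_def by auto
  define P0 where "P0 = butlast P"
  have PP: "P = P0 @ [vi]" using ne l P0_def by (metis append_butlast_last_id)
  have P0ne: "P0 \<noteq> []" using PP h v(3) by auto
  have a: "adj G (last P0) vi"
  proof -
    have k1: "Suc (length P0 - 1) < length P" "Suc (length P0 - 1) = length P0" using PP P0ne by auto
    have "adj G (P ! (length P0 - 1)) (P ! Suc (length P0 - 1))" using ad k1(1) by blast
    then have "adj G (P ! (length P0 - 1)) (P ! length P0)" using k1(2) by simp
    then show ?thesis using PP P0ne by (simp add: nth_append last_conv_nth)
  qed
  then have yn: "last P0 \<in> nbrs G vi" using sym adjv unfolding nbrs_def by blast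
  show False
  proof (cases "last P0 = v")
    case True
    then show False using yn v Lp by auto
  next
    case False
    have "last P0 \<noteq> vi" using d PP P0ne by auto
    moreover have "last P0 \<in> set P" using PP P0ne by auto
    ultimately show False using pendant_not_interior[OF sym PG] False pend[OF yn] by blast
  qed
qed

lemma lkF:
  assumes v: "v \<in> verts H" "v \<noteq> vi" and LR: "Li \<in> R"
  shows "lk G v Li = \<beta> * lk H v vi"
proof -
  define P where "P = geod G v vi"
  have PH: "is_path H P v vi" using pathH_geod v viH P_def by simp
  have PG: "is_path G P v vi" using path_H[OF v(1) viH] PH by simp
  from PH have ne: "P \<noteq> []" and h: "hd P = v" and l: "last P = vi" and d: "distinct P"
    and sv: "set P \<subseteq> verts H" and ad: "\<forall>k. Suc k < length P \<longrightarrow> adj H (P ! k) (P ! Suc k)"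
    unfolding is_path_def by auto
  have LnP: "Li \<notin> set P" using sv LR by (auto simp: H_simps)
  define P0 where "P0 = butlast P"
  have PP: "P = P0 @ [vi]" using ne l P0_def by (metis append_butlast_last_id)
  have P0ne: "P0 \<noteq> []" using PP h v(2) by auto
  have viP0: "vi \<notin> set P0" using d PP by simp
  have lastP0: "last P0 = par"
  proof -
    have k1: "Suc (length P0 - 1) < length P" "Suc (length P0 - 1) = length P0" using PP P0ne by auto
    have "adj H (P ! (length P0 - 1)) (P ! Suc (length P0 - 1))" using ad k1(1) by blast
    then have "adj H (P ! (length P0 - 1)) (P ! length P0)" using k1(2) by simp
    then have "adj H (last P0) vi" using PP P0ne by (simp add: nth_append last_conv_nth)
    then have "last P0 \<in> nbrs H vi" using Hsym sv PP P0ne unfolding nbrs_def by auto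
    then show ?thesis using nbrsH_vi by simp
  qed
  have QG: "is_path G (P @ [Li]) v Li"
  proof -
    from PG have svG: "set P \<subseteq> verts G" and adG: "\<forall>k. Suc k < length P \<longrightarrow> adj G (P ! k) (P ! Suc k)"
      unfolding is_path_def by auto
    have "adj G ((P @ [Li]) ! k) ((P @ [Li]) ! Suc k)" if "Suc k < length (P @ [Li])" for k
    proof (cases "Suc k < length P")
      case True then show ?thesis using adG by (simp add: nth_append)
    next
      case False
      then have "k = length P - 1" using that by simp
      then have "(P @ [Li]) ! k = vi" "(P @ [Li]) ! Suc k = Li" using ne l
        by (auto simp: nth_append last_conv_nth)
      then show ?thesis using Li_arr(2) unfolding nbrs_def by simp
    qed
    then show ?thesis using ne h d LnP svG Li_arr arrv unfolding is_path_def by auto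
  qed
  have gQ: "geod G v Li = P @ [Li]" using geod_eq[OF wf QG] .
  have peP: "path_edges P = insert {par, vi} (path_edges P0)"
    unfolding PP pe_snoc using P0ne lastP0 by simp
  have peQ: "path_edges (P @ [Li]) = insert {vi, Li} (insert {par, vi} (path_edges P0))"
    unfolding pe_snoc using ne l peP by simp
  have s1: "set (P @ [Li]) \<inter> nodes G = insert vi (set P0 \<inter> nodes G)"
    using PP Li_nodes vi_node by auto
  have s2: "set P \<inter> nodes H = set P0 \<inter> nodes G"
    using PP nodesH viP0 by auto
  have g1: "{u \<in> nbrs G vi. {vi, u} \<notin> path_edges (P @ [Li])} = nbrs G vi - {par, Li}"
  proof -
    have "{vi, u} \<notin> path_edges P0" for u using pe_subset viP0 by blast
    moreover have "u \<noteq> vi" if "u \<in> nbrs G vi" for u using that adjv unfolding nbrs_def by auto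
    ultimately show ?thesis unfolding peQ by (auto simp: doubleton_eq_iff)
  qed
  have g2: "(\<Prod>u\<in>{u \<in> nbrs G x. {x, u} \<notin> path_edges (P @ [Li])}. wt G x u) =
     (\<Prod>u\<in>{u \<in> nbrs H x. {x, u} \<notin> path_edges P}. wt H x u)" if x: "x \<in> set P0 \<inter> nodes G" for x
  proof -
    have "x \<in> verts H" "x \<noteq> vi" "x \<noteq> Li" using x sv PP viP0 Li_nodes by auto
    then show ?thesis using nbrsH unfolding peQ peP by (auto simp: H_simps doubleton_eq_iff)
  qed
  have "lk G v Li = (\<Prod>u\<in>nbrs G vi - {par, Li}. wt G vi u) *
      (\<Prod>x\<in>set P0 \<inter> nodes G. \<Prod>u\<in>{u \<in> nbrs G x. {x, u} \<notin> path_edges (P @ [Li])}. wt G x u)"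
    unfolding lk_def gQ s1 using viP0 g1 by (simp add: prod.insert)
  also have "\<dots> = \<beta> * lk H v vi"
    unfolding lk_def collapse_beta_def geodH[OF v(1) viH] P_def[symmetric] s2
    using g2 by simp
  finally show ?thesis .
qed

lemma lkF':
  assumes v: "v \<in> verts H" "v \<noteq> vi" and LR: "Li \<in> R"
  shows "lk G Li v = \<beta> * lk H vi v"
proof -
  have vG: "v \<in> verts G" using v vH by auto
  have LG: "Li \<in> verts G" using Li_arr arrv by blast
  have "lk G Li v = lk G v Li" using lk_sym_gen[OF geod_rev[OF wf vG LG]] .
  moreover have "geod H vi v = rev (geod H v vi)"
    unfolding geodH[OF v(1) viH] geodH[OF viH v(1)] using geod_rev[OF wf vG viv] .
  then have "lk H vi v = lk H v vi" by (rule lk_sym_gen)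
  ultimately show ?thesis using lkF[OF v LR] by simp
qed

lemma finA: "finite (arrows G)" using finite_subset[OF arrv fin] .

lemma arr_nR: "a \<in> arrows G \<Longrightarrow> a \<noteq> Li \<Longrightarrow> a \<in> verts H \<and> a \<noteq> vi \<and> a \<in> verts G \<and> a \<notin> R"
  using R_al[of a] arrv vi_na unfolding leaves_def by (auto simp: H_simps)

lemma vmultH:
  assumes v: "v \<in> verts H" "v \<notin> arrows H" "v \<noteq> Li"
  shows "vmult H v = vmult G v"
proof -
  have v2: "v \<noteq> vi" "v \<in> verts G" "v \<notin> R" using v by (auto simp: H_simps)
  have LR: "Li \<in> R" using lkD v2 v(3) by blast
  have "vmult H v = (\<Sum>j\<in>insert vi (arrows G - {Li}). amult H j * lk H v j)"
    unfolding vmult_def by (simp add: H_simps insert_commute)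
  also have "\<dots> = amult H vi * lk H v vi + (\<Sum>j\<in>arrows G - {Li}. amult H j * lk H v j)"
    using finA vi_na by (simp add: sum.insert)
  also have "\<dots> = amult G Li * lk G v Li + (\<Sum>j\<in>arrows G - {Li}. amult G j * lk G v j)"
  proof -
    have "(\<Sum>j\<in>arrows G - {Li}. amult H j * lk H v j) = (\<Sum>j\<in>arrows G - {Li}. amult G j * lk G v j)"
    proof (rule sum.cong[OF refl])
      fix j assume j: "j \<in> arrows G - {Li}"
      then have "j \<in> verts H" "j \<noteq> vi" using arr_nR by auto
      then show "amult H j * lk H v j = amult G j * lk G v j"
        using lkE[OF v(1) v2(1)] by (simp add: H_simps)
    qed
    moreover have "amult H vi * lk H v vi = amult G Li * lk G v Li"
      using lkF[OF v(1) v2(1) LR] by (simp add: H_simps)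
    ultimately show ?thesis by simp
  qed
  also have "\<dots> = vmult G v" unfolding vmult_def using finA Li_arr by (simp add: sum.remove)
  finally show ?thesis .
qed

lemma degen:
  assumes L: "Li \<in> verts H"
  shows "arrows G = {Li}" "lk G vi Li = \<beta>" "lk H Li vi = 1"
proof -
  have LR: "Li \<notin> R" using L by (simp add: H_simps)
  show A: "arrows G = {Li}"
  proof -
    have "j = Li" if j: "j \<in> arrows G" for j
    proof (rule ccontr)
      assume jL: "j \<noteq> Li"
      then have jj: "j \<in> verts G" "j \<notin> R" "j \<noteq> vi" using arr_nR[OF j jL] by auto
      show False using LR lkD[OF jj jL] by (rule notE)
    qed
    then show ?thesis using Li_arr(1) by blast
  qed
  have Lp: "Li = par" using LR Li_arr by auto
  have LG: "Li \<in> verts G" using Li_arr arrv by auto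
  have vL: "vi \<noteq> Li" using vi_na Li_arr by auto
  have p1: "is_path G [vi, Li] vi Li"
    using viv LG vL Li_arr(2) unfolding is_path_def nbrs_def by (auto simp: less_Suc_eq)
  have g1: "geod G vi Li = [vi, Li]" using geod_eq[OF wf p1] .
  have "set [vi, Li] \<inter> nodes G = {vi}" using vi_node Li_nodes by auto
  moreover have "{u \<in> nbrs G vi. {vi, u} \<notin> path_edges [vi, Li]} = nbrs G vi - {par, Li}"
    using Lp by (auto simp: pe_Cons doubleton_eq_iff)
  ultimately show "lk G vi Li = \<beta>" unfolding lk_def g1 collapse_beta_def by simp
  have "geod H Li vi = geod G Li vi" using geodH[OF L viH] .
  also have "\<dots> = [Li, vi]" using geod_rev[OF wf viv LG] g1 by simp
  finally have "set (geod H Li vi) \<inter> nodes H = {}" using nodesH Li_nodes by auto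
  then show "lk H Li vi = 1" unfolding lk_def by simp
qed

lemma condsH:
  assumes "condA G" "condB G" "condC G"
  shows "condA H \<and> condB H \<and> condC H"
proof (intro conjI)
  have nH: "v \<in> nodes H \<Longrightarrow> v \<in> nodes G \<and> v \<in> verts H" for v using nodesH nodesH_v by auto
  show "condA H" using assms(1) nH near_H far_H unfolding condA_def by (auto simp: H_simps)
  show "condB H" using assms(2) nH far_H beyondH unfolding condB_def by (auto simp: H_simps)
  show "condC H" unfolding condC_def
  proof
    fix v assume v: "v \<in> verts H - arrows H"
    show "vmult H v > 0"
    proof (cases "v = Li")
      case False
      have "v \<in> verts G - arrows G" using v False by (auto simp: H_simps)
      then show ?thesis using vmultH v False assms(3) unfolding condC_def by auto
    next
      case True
      have L: "Li \<in> verts H" using v True by simp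
      have "vmult G vi > 0" using assms(3) viv vi_na unfolding condC_def by auto
      moreover have "vmult G vi = amult G Li * \<beta>" unfolding vmult_def degen(1)[OF L] using degen(2)[OF L] by simp
      moreover have "vmult H Li = \<beta> * amult G Li"
        unfolding vmult_def using degen[OF L] by (simp add: H_simps)
      ultimately show ?thesis using True by (simp add: mult.commute)
    qed
  qed
qed

lemma dsum:
  assumes "finite A" "c \<in> A" "d \<in> A"
  shows "(\<Sum>x\<in>A. \<Sum>y\<in>A. (if x = c then s else 0) * (if y = d then t else 0) * M x y) = s * t * (M c d :: rat)"
proof -
  have "(\<Sum>x\<in>A. \<Sum>y\<in>A. (if x = c then s else 0) * (if y = d then t else 0) * M x y)
      = (\<Sum>x\<in>A. if x = c then (\<Sum>y\<in>A. if y = d then s * t * M x y else 0) else 0)"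
    by (rule sum.cong[OF refl]) (auto intro: sum.cong)
  also have "\<dots> = s * t * M c d" using assms by simp
  finally show ?thesis .
qed

lemma lm:
  assumes a: "a \<in> arrows G" and b: "b \<in> arrows G"
  shows "linkmat G a b = (if a = Li then of_int \<beta> else 1) * (if b = Li then of_int \<beta> else 1) *
           linkmat H (if a = Li then vi else a) (if b = Li then vi else b)"
proof (cases "a = b")
  case False
  have ab: "a \<noteq> vi" "b \<noteq> vi" using a b vi_na by auto
  then have ne: "(if a = Li then vi else a) \<noteq> (if b = Li then vi else b)" using False by auto
  show ?thesis
  proof (cases "a = Li")
    case True
    then have bL: "b \<noteq> Li" using False by simp
    have LR: "Li \<in> R" using lkD arr_nR[OF b bL] bL by blast
    show ?thesis using ne False True bL lkF'[OF _ _ LR] arr_nR[OF b bL] unfolding linkmat_def by simp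
  next
    case aL: False
    show ?thesis
    proof (cases "b = Li")
      case True
      have LR: "Li \<in> R" using lkD arr_nR[OF a aL] aL by blast
      show ?thesis using ne False True aL lkF[OF _ _ LR] arr_nR[OF a aL] unfolding linkmat_def by simp
    next
      case bL: False
      show ?thesis using ne False aL bL lkE arr_nR[OF a aL] arr_nR[OF b bL] unfolding linkmat_def by simp
    qed
  qed
next
  case True
  note ab = True
  show ?thesis
  proof (cases "a = Li")
    case False
    have av: "a \<in> verts H" "a \<noteq> vi" "a \<in> verts G" "a \<notin> R" using arr_nR[OF a False] by auto
    have LR: "Li \<in> R" using lkD av False by blast
    have e1: "arrows H - {a} = insert vi (arrows G - {a} - {Li})" using av False by (auto simp: H_simps)
    have "(\<Sum>j\<in>arrows H - {a}. of_int (amult H j * lk H a j) :: rat)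
        = of_int (amult H vi * lk H a vi) + (\<Sum>j\<in>arrows G - {a} - {Li}. of_int (amult H j * lk H a j))"
      unfolding e1 using finA vi_na by (simp add: sum.insert)
    also have "\<dots> = of_int (amult G Li * lk G a Li) + (\<Sum>j\<in>arrows G - {a} - {Li}. of_int (amult G j * lk G a j))"
    proof -
      have "(\<Sum>j\<in>arrows G - {a} - {Li}. of_int (amult H j * lk H a j) :: rat)
          = (\<Sum>j\<in>arrows G - {a} - {Li}. of_int (amult G j * lk G a j))"
      proof (rule sum.cong[OF refl])
        fix j assume j: "j \<in> arrows G - {a} - {Li}"
        then have "j \<in> verts H" "j \<noteq> vi" using arr_nR by auto
        then show "(of_int (amult H j * lk H a j) :: rat) = of_int (amult G j * lk G a j)"
          using lkE[OF av(1) av(2)] by (simp add: H_simps)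
      qed
      moreover have "amult H vi * lk H a vi = amult G Li * lk G a Li"
        using lkF[OF av(1) av(2) LR] by (simp add: H_simps)
      ultimately show ?thesis by simp
    qed
    also have "\<dots> = (\<Sum>j\<in>arrows G - {a}. of_int (amult G j * lk G a j))"
      using finA Li_arr False by (simp add: sum.remove[of "arrows G - {a}" Li])
    finally have "(\<Sum>j\<in>arrows H - {a}. of_int (amult H j * lk H a j) :: rat) =
       (\<Sum>j\<in>arrows G - {a}. of_int (amult G j * lk G a j))" .
    moreover have "amult H a = amult G a" using av by (simp add: H_simps)
    ultimately show ?thesis using ab False unfolding linkmat_def by simp
  next
    case True
    have e1: "arrows H - {vi} = arrows G - {Li}" using vi_na by (auto simp: H_simps)
    define S where "S = (\<Sum>j\<in>arrows G - {Li}. of_int (amult G j * lk H vi j) :: rat)"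
    have s1: "(\<Sum>j\<in>arrows H - {vi}. of_int (amult H j * lk H vi j) :: rat) = S"
      unfolding e1 S_def using vi_na by (intro sum.cong) (auto simp: H_simps)
    have s2: "(\<Sum>j\<in>arrows G - {Li}. of_int (amult G j * lk G Li j) :: rat) = of_int \<beta> * S"
      unfolding S_def sum_distrib_left
    proof (rule sum.cong[OF refl])
      fix j assume j: "j \<in> arrows G - {Li}"
      then have jv: "j \<in> verts H" "j \<noteq> vi" "j \<in> verts G" "j \<notin> R" using arr_nR by auto
      have LR: "Li \<in> R" using lkD jv j by blast
      show "(of_int (amult G j * lk G Li j) :: rat) = of_int \<beta> * of_int (amult G j * lk H vi j)"
        using lkF'[OF jv(1) jv(2) LR] by simp
    qed
    have am: "amult H vi = \<beta> * amult G Li" by (simp add: H_simps)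
    have l1: "linkmat G Li Li = - (of_int \<beta> * S) / of_int (amult G Li)"
      unfolding linkmat_def if_P[OF refl] s2 ..
    have l2: "linkmat H vi vi = - S / of_int (\<beta> * amult G Li)"
      unfolding linkmat_def if_P[OF refl] s1 am ..
    have l3: "- (of_int \<beta> * S) / of_int (amult G Li) = of_int \<beta> * of_int \<beta> * (- S / of_int (\<beta> * amult G Li) :: rat)"
      by (cases "\<beta> = 0"; cases "amult G Li = 0") (auto simp: field_simps)
    show ?thesis using ab True l1 l2 l3 by simp
  qed
qed

end

theorem lemma3p17:
  fixes G :: "'v diagram" and vi Li :: 'v
  assumes "wf_diagram G"
    and "collapsible G vi Li"
  shows "(\<forall>a\<in>arrows G. \<forall>b\<in>arrows G.
            linkmat G a b =
            lk_comb (collapse G vi Li)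
              (if a = Li then (\<lambda>x. if x = vi then of_int (collapse_beta G vi Li) else 0)
               else (\<lambda>x. if x = a then 1 else 0))
              (if b = Li then (\<lambda>x. if x = vi then of_int (collapse_beta G vi Li) else 0)
               else (\<lambda>x. if x = b then 1 else 0)))
       \<and> (condA G \<and> condB G \<and> condC G \<longrightarrow>
            condA (collapse G vi Li) \<and> condB (collapse G vi Li) \<and> condC (collapse G vi Li))"
proof (rule conjI, intro ballI)
  fix a b assume a: "a \<in> arrows G" and b: "b \<in> arrows G"
  let ?H = "collapse G vi Li"
  let ?\<beta> = "collapse_beta G vi Li"
  have fH: "finite (arrows ?H)" using finA[OF assms] by (simp add: H_simps[OF assms])
  have f: "\<And>c. c \<in> arrows G \<Longrightarrow> (if c = Li then (\<lambda>x. if x = vi then of_int ?\<beta> else 0)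
               else (\<lambda>x. if x = c then 1 else 0)) =
        (\<lambda>x. if x = (if c = Li then vi else c) then (if c = Li then of_int ?\<beta> else 1) else (0::rat))"
    by auto
  have inH: "\<And>c. c \<in> arrows G \<Longrightarrow> (if c = Li then vi else c) \<in> arrows ?H"
    by (simp add: H_simps[OF assms])
  show "linkmat G a b = lk_comb ?H
              (if a = Li then (\<lambda>x. if x = vi then of_int ?\<beta> else 0)
               else (\<lambda>x. if x = a then 1 else 0))
              (if b = Li then (\<lambda>x. if x = vi then of_int ?\<beta> else 0)
               else (\<lambda>x. if x = b then 1 else 0))"
    unfolding f[OF a] f[OF b] lk_comb_def dsum[OF assms fH inH[OF a] inH[OF b]]
    using lm[OF assms a b] .
next
  show "condA G \<and> condB G \<and> condC G \<longrightarrow>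
            condA (collapse G vi Li) \<and> condB (collapse G vi Li) \<and> condC (collapse G vi Li)"
    using condsH[OF assms] by blast
qed


end
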